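(* Let $a$ and $b$ be relatively prime integers with $1<a<b$, let $(u,v)$ be the definitely least solution of $ax+by=1$, let $S=\langle a,b\rangle$, and let $h=\min I(S)$. Then $$I(S)=\{\,h+kb+ja : 0\le k\le |v|-1,\ 0\le j\le |u|-1\,\},$$ i.e. $I(S)=\{h,h+a,\dots,h+(|u|-1)a\}\cup\{h+b,h+b+a,\dots,h+b+(|u|-1)a\}\cup\cdots\cup\{h+(|v|-1)b,\dots,h+(|v|-1)b+(|u|-1)a\}$.
   Context: $\mathbb{N}$ is the set of nonnegative integers and $\langle a,b\rangle=\{\lambda_1a+\lambda_2b:\lambda_1,\lambda_2\in\mathbb{N}\}$. An isolated gap of a numerical semigroup $S$ is an element $x\in\mathbb{N}\setminus S$ with $x-1\in S$ and $x+1\in S$; $I(S)$ is the set of isolated gaps (it is nonempty for $S=\langle a,b\rangle$). The definitely least solution $(u,v)$ of $ax+by=1$ is the unique integer solution for which both $|u|$ and $|v|$ are as small as possible; equivalently the solution with $|u|\le b/2$ and $|v|\le a/2$. *)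

theory Defs
  imports Main
begin

definition semigroup2 :: "nat \<Rightarrow> nat \<Rightarrow> nat set" where
  "semigroup2 a b = {l1 * a + l2 * b | l1 l2. True}"

definition isolated_gaps :: "nat set \<Rightarrow> nat set" where
  "isolated_gaps S = {x. x \<notin> S \<and> x \<ge> 1 \<and> x - 1 \<in> S \<and> x + 1 \<in> S}"

definition definitely_least_sol :: "int \<Rightarrow> int \<Rightarrow> int \<Rightarrow> int \<Rightarrow> bool" where
  "definitely_least_sol a b u v \<longleftrightarrow>
     a * u + b * v = 1 \<and>
     (\<forall>x y. a * x + b * y = 1 \<longrightarrow> \<bar>u\<bar> \<le> \<bar>x\<bar> \<and> \<bar>v\<bar> \<le> \<bar>y\<bar>)"

end

theory Submission
  imports Defs
begin

definition Sint :: "int \<Rightarrow> int \<Rightarrow> int set" where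
  "Sint a b = {l1 * a + l2 * b | l1 l2. l1 \<ge> 0 \<and> l2 \<ge> 0}"

lemma sg_iff: "(n \<in> semigroup2 a b) \<longleftrightarrow> int n \<in> Sint (int a) (int b)"
proof
  assume "n \<in> semigroup2 a b"
  then obtain l1 l2 where "n = l1 * a + l2 * b" unfolding semigroup2_def by auto
  then have "int n = int l1 * int a + int l2 * int b" by simp
  then show "int n \<in> Sint (int a) (int b)" unfolding Sint_def by fastforce
next
  assume "int n \<in> Sint (int a) (int b)"
  then obtain l1 l2 :: int where h: "l1 \<ge> 0" "l2 \<ge> 0" "int n = l1 * int a + l2 * int b"
    unfolding Sint_def by auto
  then have "int n = int (nat l1 * a + nat l2 * b)" by simp
  then have "n = nat l1 * a + nat l2 * b" by (simp only: of_nat_eq_iff)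
  then show "n \<in> semigroup2 a b" unfolding semigroup2_def by blast
qed

lemma keyK:
  fixes a b p q n :: int
  assumes cop: "coprime a b" and a0: "a > 0" and b0: "b > 0"
    and n: "n = p * a + q * b" and q0: "0 \<le> q" and qa: "q < a"
  shows "n \<in> Sint a b \<longleftrightarrow> p \<ge> 0"
proof
  assume "p \<ge> 0"
  then show "n \<in> Sint a b" using n q0 unfolding Sint_def by blast
next
  assume "n \<in> Sint a b"
  then obtain l1 l2 where h: "l1 \<ge> 0" "l2 \<ge> 0" "n = l1 * a + l2 * b"
    unfolding Sint_def by auto
  have e: "(p - l1) * a = (l2 - q) * b" using h n by (simp add: algebra_simps)
  then have "a dvd (l2 - q) * b" by (metis dvd_triv_right)
  then have "a dvd (l2 - q)" using cop by (simp add: coprime_dvd_mult_left_iff)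
  then obtain m where m: "l2 - q = a * m" by auto
  have "a * (-1) < a * m" using m h qa by linarith
  then have "-1 < m" using mult_less_cancel_left_pos[OF a0] by blast
  then have "m \<ge> 0" by simp
  then have "a * m \<ge> 0" using a0 by simp
  then have "(l2 - q) * b \<ge> 0" using m b0 by simp
  then have "(p - l1) * a \<ge> 0" using e by simp
  then have "p - l1 \<ge> 0" using a0 by (simp add: zero_le_mult_iff)
  then show "p \<ge> 0" using h by linarith
qed

lemma repr:
  fixes a b u v n :: int
  assumes h: "a * u + b * v = 1" and a0: "a > 0"
  shows "\<exists>p q. n = p * a + q * b \<and> 0 \<le> q \<and> q < a"
proof -
  define d where "d = (n * v) div a"
  define r where "r = (n * v) mod a"
  have dr: "a * d + r = n * v" unfolding d_def r_def by (rule mult_div_mod_eq)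
  have r0: "0 \<le> r" "r < a" unfolding r_def using a0 by auto
  have "(n * u + b * d) * a + r * b = n * (a * u + b * v)" using dr by algebra
  then have "n = (n * u + b * d) * a + r * b" using h by simp
  then show ?thesis using r0 by blast
qed

lemma shiftp:
  fixes n p q A B u v t :: int
  assumes "n = p*A+q*B" "A*u+B*v=1"
  shows "n + 1 = (p+u+t*B)*A + (q+v-t*A)*B"
  using assms by algebra

lemma shiftm:
  fixes n p q A B u v t :: int
  assumes "n = p*A+q*B" "A*u+B*v=1"
  shows "n - 1 = (p-u+t*B)*A + (q-v-t*A)*B"
  using assms by algebra

lemma char:
  fixes a b :: nat and u v :: int
  assumes cop: "coprime a b" and a1: "1 < a" and ab: "a < b"
    and huv: "int a * u + int b * v = 1"
    and U2: "2 * \<bar>u\<bar> \<le> int b" and V2: "2 * \<bar>v\<bar> \<le> int a"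
    and sg: "(u > 0 \<and> v < 0) \<or> (u < 0 \<and> v > 0)"
  shows "x \<in> isolated_gaps (semigroup2 a b) \<longleftrightarrow>
    (\<exists>p q. int x = p * int a + q * int b \<and> - \<bar>u\<bar> \<le> p \<and> p \<le> -1
        \<and> int a - \<bar>v\<bar> \<le> q \<and> q \<le> int a - 1)"
proof -
  define A where "A = int a"
  define B where "B = int b"
  have copA: "coprime A B" using cop unfolding A_def B_def by simp
  have A0: "A > 0" and B0: "B > 0" using a1 ab unfolding A_def B_def by auto
  have K: "\<And>n p q. n = p * A + q * B \<Longrightarrow> 0 \<le> q \<Longrightarrow> q < A \<Longrightarrow> (n \<in> Sint A B \<longleftrightarrow> p \<ge> 0)"
    using keyK[OF copA A0 B0] by blast
  have huv': "A * u + B * v = 1" using huv unfolding A_def B_def .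
  have U2': "2 * \<bar>u\<bar> \<le> B" using U2 unfolding B_def .
  have V2': "2 * \<bar>v\<bar> \<le> A" using V2 unfolding A_def .
  have I_iff: "x \<in> isolated_gaps (semigroup2 a b) \<longleftrightarrow>
     int x \<notin> Sint A B \<and> x \<ge> 1 \<and> int x - 1 \<in> Sint A B \<and> int x + 1 \<in> Sint A B"
    unfolding isolated_gaps_def A_def B_def
    by (auto simp: sg_iff of_nat_diff add.commute)
  show ?thesis unfolding I_iff A_def[symmetric] B_def[symmetric]
  proof
    assume H: "int x \<notin> Sint A B \<and> x \<ge> 1 \<and> int x - 1 \<in> Sint A B \<and> int x + 1 \<in> Sint A B"
    then have Hn: "int x \<notin> Sint A B" and Hm: "int x - 1 \<in> Sint A B"
      and Hp: "int x + 1 \<in> Sint A B" by auto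
    obtain p q where pq: "int x = p * A + q * B" "0 \<le> q" "q < A"
      using repr[OF huv' A0] by blast
    have p0: "p < 0" using K[OF pq] Hn by linarith
    have P0: "int x + 1 = (p+u)*A + (q+v)*B" using pq(1) huv' by algebra
    have P1: "int x + 1 = (p+u+B)*A + (q+v-A)*B" using pq(1) huv' by algebra
    have Pm: "int x + 1 = (p+u-B)*A + (q+v+A)*B" using pq(1) huv' by algebra
    have M0: "int x - 1 = (p-u)*A + (q-v)*B" using pq(1) huv' by algebra
    have M1: "int x - 1 = (p-u+B)*A + (q-v-A)*B" using pq(1) huv' by algebra
    have Mm: "int x - 1 = (p-u-B)*A + (q-v+A)*B" using pq(1) huv' by algebra
    have bnd: "- \<bar>u\<bar> \<le> p \<and> A - \<bar>v\<bar> \<le> q"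
    proof (cases "u > 0")
      case True
      then have v0: "v < 0" using sg by auto
      have ua: "\<bar>u\<bar> = u" "\<bar>v\<bar> = - v" using True v0 by auto
      have "q + v \<ge> 0"
      proof (rule ccontr)
        assume c: "\<not> q + v \<ge> 0"
        have "0 \<le> q + v + A" "q + v + A < A" using c pq V2' ua by linarith+
        then have "p + u - B \<ge> 0" using K[OF Pm] Hp by blast
        then show False using p0 U2' ua by linarith
      qed
      moreover have "q + v < A" using pq v0 by linarith
      ultimately have pu: "p + u \<ge> 0" using K[OF P0] Hp by blast
      have "q - v \<ge> A"
      proof (rule ccontr)
        assume c: "\<not> q - v \<ge> A"
        have "0 \<le> q - v" using pq v0 by linarith
        then have "p - u \<ge> 0" using K[OF M0] Hm c by auto
        then show False using p0 True by linarith
      qed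
      then show ?thesis using pu ua by linarith
    next
      case False
      then have u0: "u < 0" and v0: "v > 0" using sg by auto
      have ua: "\<bar>u\<bar> = - u" "\<bar>v\<bar> = v" using u0 v0 by auto
      have c1: "q + v \<ge> A"
      proof (rule ccontr)
        assume c: "\<not> q + v \<ge> A"
        have "0 \<le> q + v" using pq v0 by linarith
        then have "p + u \<ge> 0" using K[OF P0] Hp c by auto
        then show False using p0 u0 by linarith
      qed
      have c2: "q - v \<ge> 0"
      proof (rule ccontr)
        assume c: "\<not> q - v \<ge> 0"
        have "0 \<le> q - v + A" "q - v + A < A" using c pq V2' ua by linarith+
        then have "p - u - B \<ge> 0" using K[OF Mm] Hm by blast
        then show False using p0 U2' ua by linarith
      qed
      moreover have "q - v < A" using pq v0 by linarith
      ultimately have "p - u \<ge> 0" using K[OF M0] Hm by blast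
      then show ?thesis using c1 ua by linarith
    qed
    show "\<exists>p q. int x = p * A + q * B \<and> - \<bar>u\<bar> \<le> p \<and> p \<le> -1
        \<and> A - \<bar>v\<bar> \<le> q \<and> q \<le> A - 1"
      using pq bnd p0 by (intro exI[of _ p] exI[of _ q]) linarith
  next
    assume "\<exists>p q. int x = p * A + q * B \<and> - \<bar>u\<bar> \<le> p \<and> p \<le> -1
        \<and> A - \<bar>v\<bar> \<le> q \<and> q \<le> A - 1"
    then obtain p q where pq: "int x = p * A + q * B" and b: "- \<bar>u\<bar> \<le> p" "p \<le> -1"
        "A - \<bar>v\<bar> \<le> q" "q \<le> A - 1" by blast
    have q0: "0 \<le> q" "q < A" using b V2' by linarith+
    have P0: "int x + 1 = (p+u)*A + (q+v)*B" using pq(1) huv' by algebra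
    have P1: "int x + 1 = (p+u+B)*A + (q+v-A)*B" using pq(1) huv' by algebra
    have M0: "int x - 1 = (p-u)*A + (q-v)*B" using pq(1) huv' by algebra
    have M1: "int x - 1 = (p-u+B)*A + (q-v-A)*B" using pq(1) huv' by algebra
    have nS: "int x \<notin> Sint A B" using K[OF pq q0] b by linarith
    have "0 \<in> Sint A B" unfolding Sint_def by (rule CollectI, rule exI[of _ 0], rule exI[of _ 0]) simp
    then have x1: "x \<ge> 1" using nS by (cases x) auto
    have "int x - 1 \<in> Sint A B \<and> int x + 1 \<in> Sint A B"
    proof (cases "u > 0")
      case True
      then have v0: "v < 0" using sg by auto
      have ua: "\<bar>u\<bar> = u" "\<bar>v\<bar> = - v" using True v0 by auto
      have "0 \<le> q + v" "q + v < A" "0 \<le> p + u" using b ua V2' v0 by linarith+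
      then have "int x + 1 \<in> Sint A B" using K[OF P0] by blast
      moreover have "0 \<le> q - v - A" "q - v - A < A" "0 \<le> p - u + B" using b ua V2' U2' v0
        by linarith+
      then have "int x - 1 \<in> Sint A B" using K[OF M1] by blast
      ultimately show ?thesis by simp
    next
      case False
      then have u0: "u < 0" and v0: "v > 0" using sg by auto
      have ua: "\<bar>u\<bar> = - u" "\<bar>v\<bar> = v" using u0 v0 by auto
      have "0 \<le> q + v - A" "q + v - A < A" "0 \<le> p + u + B" using b ua V2' U2' v0 q0
        by linarith+
      then have "int x + 1 \<in> Sint A B" using K[OF P1] by blast
      moreover have "0 \<le> q - v" "q - v < A" "0 \<le> p - u" using b ua V2' v0 q0 by linarith+
      then have "int x - 1 \<in> Sint A B" using K[OF M0] by blast
      ultimately show ?thesis by simp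
    qed
    then show "int x \<notin> Sint A B \<and> x \<ge> 1 \<and> int x - 1 \<in> Sint A B \<and> int x + 1 \<in> Sint A B"
      using nS x1 by simp
  qed
qed

theorem theorem4p8:
  fixes a b :: nat and u v :: int
  assumes "coprime a b" and "1 < a" and "a < b"
    and "definitely_least_sol (int a) (int b) u v"
  shows "isolated_gaps (semigroup2 a b) =
    {Min (isolated_gaps (semigroup2 a b)) + k * b + j * a | k j.
       k < nat \<bar>v\<bar> \<and> j < nat \<bar>u\<bar>}"
proof -
  define A where "A = int a"
  define B where "B = int b"
  define U where "U = \<bar>u\<bar>"
  define V where "V = \<bar>v\<bar>"
  define I where "I = isolated_gaps (semigroup2 a b)"
  have A1: "A > 1" and AB: "A < B" using assms(2,3) unfolding A_def B_def by auto
  have huv: "A * u + B * v = 1" and mn: "\<And>x y. A * x + B * y = 1 \<Longrightarrow> U \<le> \<bar>x\<bar> \<and> V \<le> \<bar>y\<bar>"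
    using assms(4) unfolding definitely_least_sol_def A_def B_def U_def V_def by auto
  have "A * (u - B) + B * (v + A) = 1" using huv by algebra
  from mn[OF this] have m1: "U \<le> \<bar>u - B\<bar>" "V \<le> \<bar>v + A\<bar>" by auto
  have "A * (u + B) + B * (v - A) = 1" using huv by algebra
  from mn[OF this] have m2: "U \<le> \<bar>u + B\<bar>" "V \<le> \<bar>v - A\<bar>" by auto
  have U2: "2 * U \<le> B" using m1 m2 AB A1 unfolding U_def by arith
  have V2: "2 * V \<le> A" using m1 m2 AB A1 unfolding V_def by arith
  have sg: "(u > 0 \<and> v < 0) \<or> (u < 0 \<and> v > 0)"
  proof -
    have "u \<noteq> 0"
    proof
      assume "u = 0"
      then have "B * v = 1" using huv by simp
      then have "B dvd 1" by (metis dvd_triv_left)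
      then show False using AB A1 by auto
    qed
    moreover have "\<not> (u > 0 \<and> v \<ge> 0)"
    proof
      assume h: "u > 0 \<and> v \<ge> 0"
      then have "A * u \<ge> A * 1" using A1 by (intro mult_left_mono) auto
      moreover have "B * v \<ge> 0" using h AB A1 by simp
      ultimately show False using huv A1 by linarith
    qed
    moreover have "\<not> (u < 0 \<and> v \<le> 0)"
    proof
      assume h: "u < 0 \<and> v \<le> 0"
      then have "A * u \<le> A * (-1)" using A1 by (intro mult_left_mono) auto
      moreover have "B * v \<le> 0" using h AB A1 by (simp add: mult_nonneg_nonpos)
      ultimately show False using huv A1 by linarith
    qed
    ultimately show ?thesis by linarith
  qed
  have U1: "U \<ge> 1" and V1: "V \<ge> 1" using sg unfolding U_def V_def by auto
  have ch: "\<And>x. x \<in> I \<longleftrightarrow> (\<exists>p q. int x = p * A + q * B \<and> - U \<le> p \<and> p \<le> -1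
        \<and> A - V \<le> q \<and> q \<le> A - 1)"
    using char[OF assms(1,2,3), of u v] huv U2 V2 sg
    unfolding I_def A_def B_def U_def V_def by auto
  define M where "M = - U * A + (A - V) * B"
  have "(2 * U) * A \<le> B * A" using U2 A1 by (intro mult_right_mono) auto
  then have s1: "2 * (U * A) \<le> B * A" by (simp add: mult.assoc)
  have "A * B \<le> (2 * (A - V)) * B" using V2 AB A1 by (intro mult_right_mono) auto
  then have s2: "A * B \<le> 2 * ((A - V) * B)" by (simp add: algebra_simps)
  from s1 s2 have M0: "M \<ge> 0" unfolding M_def by (simp add: algebra_simps)
  define m0 where "m0 = nat M"
  have m0i: "int m0 = M" using M0 unfolding m0_def by simp
  have m0I: "m0 \<in> I" unfolding ch using U1 V1 V2 A1 m0i unfolding M_def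
    by (intro exI[of _ "-U"] exI[of _ "A - V"]) auto
  have low: "m0 \<le> x" if xI: "x \<in> I" for x
  proof -
    obtain p q where pq: "int x = p * A + q * B" "- U \<le> p" "A - V \<le> q"
      using xI ch by blast
    have "(p + U) * A \<ge> 0" "(q - (A - V)) * B \<ge> 0" using pq A1 AB by auto
    moreover have "int x - int m0 = (p + U) * A + (q - (A - V)) * B"
      using pq(1) m0i unfolding M_def by (simp add: algebra_simps)
    ultimately show ?thesis by linarith
  qed
  have fin: "finite I"
  proof (rule finite_subset)
    show "I \<subseteq> {..a * b}"
    proof
      fix x assume "x \<in> I"
      then obtain p q where pq: "int x = p * A + q * B" "p \<le> -1" "q \<le> A - 1"
        using ch by blast
      have "p * A \<le> 0" using pq A1 by (simp add: mult_nonpos_nonneg)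
      moreover have "q * B \<le> A * B" using pq AB A1 by (intro mult_right_mono) auto
      ultimately have "int x \<le> int (a * b)" using pq unfolding A_def B_def by simp
      then show "x \<in> {..a * b}" by (simp only: of_nat_le_iff atMost_iff)
    qed
  qed simp
  have MinI: "Min I = m0" using fin low m0I by (intro Min_eqI) auto
  show ?thesis unfolding I_def[symmetric] MinI
  proof (intro set_eqI iffI)
    fix x assume "x \<in> I"
    then obtain p q where pq: "int x = p * A + q * B" "- U \<le> p" "p \<le> -1"
        "A - V \<le> q" "q \<le> A - 1" using ch by blast
    define k where "k = nat (q - (A - V))"
    define j where "j = nat (p + U)"
    have ki: "int k = q - (A - V)" and ji: "int j = p + U" using pq unfolding k_def j_def by auto
    have "int x = int m0 + int k * B + int j * A"
      using pq(1) m0i ki ji unfolding M_def by algebra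
    then have "int x = int (m0 + k * b + j * a)" unfolding A_def B_def by simp
    then have "x = m0 + k * b + j * a" by (simp only: of_nat_eq_iff)
    moreover have "k < nat \<bar>v\<bar>" "j < nat \<bar>u\<bar>" using ki ji pq unfolding U_def V_def by auto
    ultimately show "x \<in> {m0 + k * b + j * a | k j. k < nat \<bar>v\<bar> \<and> j < nat \<bar>u\<bar>}" by blast
  next
    fix x assume "x \<in> {m0 + k * b + j * a | k j. k < nat \<bar>v\<bar> \<and> j < nat \<bar>u\<bar>}"
    then obtain k j where kj: "x = m0 + k * b + j * a" "k < nat \<bar>v\<bar>" "j < nat \<bar>u\<bar>" by blast
    have "int x = int m0 + int k * B + int j * A" using kj(1) unfolding A_def B_def by simp
    then have "int x = (- U + int j) * A + (A - V + int k) * B"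
      using m0i unfolding M_def by algebra
    moreover have "int k < V" "int j < U" using kj unfolding U_def V_def by auto
    ultimately show "x \<in> I" unfolding ch
      by (intro exI[of _ "- U + int j"] exI[of _ "A - V + int k"]) auto
  qed
qed

end
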